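(* Let $\beta\in V_A\setminus\{\emptyset\}$ and $\nu\in\beta V_A$ with $\mathfrak c(\nu_{|\nu|})\ge2$. Choose a bijection $\iota_\nu:\{1,\dots,\mathfrak c(\nu_{|\nu|})\}\to\mathfrak C(\nu_{|\nu|})$ and set $q_m=\sum_{k=1}^mP_{\nu_{|\nu|},\iota_\nu(k)}$. For $j\in\{1,\dots,\mathfrak c(\nu_{|\nu|})-1\}$ define $a^{(\nu,j)}\in\mathbb R^{\mathfrak c(\nu_{|\nu|})}$ by $$a^{(\nu,j)}_k=\begin{cases}\Bigl(\frac{P_{\nu_{|\nu|},\iota_\nu(j+1)}}{\mu_c(C(\nu))q_jq_{j+1}}\Bigr)^{1/2},&1\le k\le j,\\ -\Bigl(\frac{q_j}{\mu_c(C(\nu))q_{j+1}P_{\nu_{|\nu|},\iota_\nu(j+1)}}\Bigr)^{1/2},&k=j+1,\\ 0,&k\ge j+2,\end{cases}$$ and $h_{\nu,j}=\sum_{k=1}^{\mathfrak c(\nu_{|\nu|})}a^{(\nu,j)}_k\chi_{C(\nu\iota_\nu(k))}$. Then: (1) $h_{\nu,j}$ is supported on $C(\nu)$ and constant on each $C(\nu i)$, $i\in\mathfrak C(\nu_{|\nu|})$; (2) $\int_{\Omega_A}h_{\nu,j}\,d\mu_c=0$; (3) $\langle h_{\nu,j},h_{\nu,j'}\rangle_{L^2(\Omega_A,\mu_c)}=\delta_{j,j'}$; (4) $\{\mu_c(C(\nu))^{-1/2}\chi_{C(\nu)}\}\cup\{h_{\nu,j}:1\le j\le\mathfrak c(\nu_{|\nu|})-1\}$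 is an orthonormal basis of the space of functions on $C(\nu)$ that are constant on each $C(\nu i)$.
   Context: $A\in M_N(\{0,1\})$ is primitive; $V_A$ is the set of admissible finite words (words $x_1\cdots x_k$ over $\{1,\dots,N\}$ with $A_{x_n,x_{n+1}}=1$), $\emptyset$ the empty word, $\beta V_A$ the admissible words starting with $\beta$. $\Omega_A$ is the space of infinite admissible sequences, $C(\alpha)$ the cylinder of sequences starting with $\alpha$, $\chi_S$ a characteristic function. $\lambda_A$ is the Perron–Frobenius eigenvalue, $u>0$ with $Au=\lambda_Au$, $\sum u_i=1$; $P_{i,j}=A_{i,j}u_j/(\lambda_Au_i)$. $\mathfrak C(i)=\{j:A_{i,j}=1\}$, $\mathfrak c(i)=\#\mathfrak C(i)$. $\mu_c$ is the Borel probability measure on $\Omega_A$ with $\mu_c(C(\alpha_1\cdots\alpha_n))=u_{\alpha_n}\lambda_A^{-(n-1)}$. *)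

theory Defs
  imports "HOL-Analysis.Analysis"
begin

text \<open>Alphabet is {1..N}; the 0/1 matrix A is given entrywise as a real-valued function.\<close>

fun mpow :: "nat \<Rightarrow> (nat \<Rightarrow> nat \<Rightarrow> real) \<Rightarrow> nat \<Rightarrow> nat \<Rightarrow> nat \<Rightarrow> real" where
  "mpow N A 0 i j = (if i = j then 1 else 0)"
| "mpow N A (Suc k) i j = (\<Sum>l\<in>{1..N}. mpow N A k i l * A l j)"

definition zero_one_matrix :: "nat \<Rightarrow> (nat \<Rightarrow> nat \<Rightarrow> real) \<Rightarrow> bool" where
  "zero_one_matrix N A \<longleftrightarrow> (\<forall>i\<in>{1..N}. \<forall>j\<in>{1..N}. A i j = 0 \<or> A i j = 1)"

definition primitive :: "nat \<Rightarrow> (nat \<Rightarrow> nat \<Rightarrow> real) \<Rightarrow> bool" where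
  "primitive N A \<longleftrightarrow> (\<exists>k\<ge>1. \<forall>i\<in>{1..N}. \<forall>j\<in>{1..N}. mpow N A k i j > 0)"

definition admissible_words :: "nat \<Rightarrow> (nat \<Rightarrow> nat \<Rightarrow> real) \<Rightarrow> nat list set" where
  "admissible_words N A = {w. set w \<subseteq> {1..N} \<and>
      (\<forall>n. Suc n < length w \<longrightarrow> A (w ! n) (w ! Suc n) = 1)}"

definition words_from :: "nat \<Rightarrow> (nat \<Rightarrow> nat \<Rightarrow> real) \<Rightarrow> nat list \<Rightarrow> nat list set" where
  "words_from N A \<beta> = {w \<in> admissible_words N A. (\<exists>w'. w = \<beta> @ w')}"

text \<open>Omega_A: infinite admissible sequences (indexed from 0).\<close>
definition Omega :: "nat \<Rightarrow> (nat \<Rightarrow> nat \<Rightarrow> real) \<Rightarrow> (nat \<Rightarrow> nat) set" where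
  "Omega N A = {x. \<forall>n. x n \<in> {1..N} \<and> A (x n) (x (Suc n)) = 1}"

definition cyl :: "nat \<Rightarrow> (nat \<Rightarrow> nat \<Rightarrow> real) \<Rightarrow> nat list \<Rightarrow> (nat \<Rightarrow> nat) set" where
  "cyl N A \<alpha> = {x \<in> Omega N A. \<forall>i < length \<alpha>. x i = \<alpha> ! i}"

definition succs :: "nat \<Rightarrow> (nat \<Rightarrow> nat \<Rightarrow> real) \<Rightarrow> nat \<Rightarrow> nat set" where
  "succs N A i = {j \<in> {1..N}. A i j = 1}"

definition nsuccs :: "nat \<Rightarrow> (nat \<Rightarrow> nat \<Rightarrow> real) \<Rightarrow> nat \<Rightarrow> nat" where
  "nsuccs N A i = card (succs N A i)"

definition Pmat :: "(nat \<Rightarrow> nat \<Rightarrow> real) \<Rightarrow> real \<Rightarrow> (nat \<Rightarrow> real) \<Rightarrow> nat \<Rightarrow> nat \<Rightarrow> real" where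
  "Pmat A lam u i j = A i j * u j / (lam * u i)"

definition is_mu_c :: "nat \<Rightarrow> (nat \<Rightarrow> nat \<Rightarrow> real) \<Rightarrow> real \<Rightarrow> (nat \<Rightarrow> real) \<Rightarrow> (nat \<Rightarrow> nat) measure \<Rightarrow> bool" where
  "is_mu_c N A lam u M \<longleftrightarrow>
     space M = Omega N A \<and>
     sets M = sigma_sets (Omega N A) (cyl N A ` admissible_words N A) \<and>
     (\<forall>\<alpha> \<in> admissible_words N A. \<alpha> \<noteq> [] \<longrightarrow>
        emeasure M (cyl N A \<alpha>) = ennreal (u (last \<alpha>) / lam ^ (length \<alpha> - 1)))"

end

theory Submission
  imports Defs
begin

theorem proposition4p1:
  fixes N :: nat and A :: "nat \<Rightarrow> nat \<Rightarrow> real" and lam :: real and u :: "nat \<Rightarrow> real"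
    and M :: "(nat \<Rightarrow> nat) measure"
    and \<beta> \<nu> :: "nat list" and \<iota> :: "nat \<Rightarrow> nat"
    and q :: "nat \<Rightarrow> real" and a :: "nat \<Rightarrow> nat \<Rightarrow> real" and h :: "nat \<Rightarrow> (nat \<Rightarrow> nat) \<Rightarrow> real"
    and e :: "nat \<Rightarrow> (nat \<Rightarrow> nat) \<Rightarrow> real" and F :: "((nat \<Rightarrow> nat) \<Rightarrow> real) set"
  assumes A01: "zero_one_matrix N A"
    and prim: "primitive N A"
    and u_pos: "\<forall>i\<in>{1..N}. u i > 0"
    and eigen: "\<forall>i\<in>{1..N}. (\<Sum>j\<in>{1..N}. A i j * u j) = lam * u i"
    and u_norm: "(\<Sum>i\<in>{1..N}. u i) = 1"
    and mu: "is_mu_c N A lam u M"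
    and beta: "\<beta> \<in> admissible_words N A" "\<beta> \<noteq> []"
    and nu: "\<nu> \<in> words_from N A \<beta>"
    and c2: "nsuccs N A (last \<nu>) \<ge> 2"
    and iota: "bij_betw \<iota> {1..nsuccs N A (last \<nu>)} (succs N A (last \<nu>))"
    and q_def: "\<And>m. q m = (\<Sum>k=1..m. Pmat A lam u (last \<nu>) (\<iota> k))"
    and a_def: "\<And>j k. a j k =
        (if 1 \<le> k \<and> k \<le> j then
           sqrt (Pmat A lam u (last \<nu>) (\<iota> (j+1)) / (measure M (cyl N A \<nu>) * q j * q (j+1)))
         else if k = j + 1 then
           - sqrt (q j / (measure M (cyl N A \<nu>) * q (j+1) * Pmat A lam u (last \<nu>) (\<iota> (j+1))))
         else 0)"
    and h_def: "\<And>j x. h j x = (\<Sum>k=1..nsuccs N A (last \<nu>).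
                   a j k * indicator (cyl N A (\<nu> @ [\<iota> k])) x)"
    and e_def: "\<And>k x. e k x = (if k = 0 then
                   indicator (cyl N A \<nu>) x / sqrt (measure M (cyl N A \<nu>)) else h k x)"
    and F_def: "F = {f. (\<forall>x \<in> Omega N A - cyl N A \<nu>. f x = 0) \<and>
                   (\<forall>i \<in> succs N A (last \<nu>). \<exists>c. \<forall>x \<in> cyl N A (\<nu> @ [i]). f x = c)}"
  shows
    "(\<forall>j\<in>{1..nsuccs N A (last \<nu>) - 1}.
        (\<forall>x \<in> Omega N A - cyl N A \<nu>. h j x = 0) \<and>
        (\<forall>i \<in> succs N A (last \<nu>). \<exists>c. \<forall>x \<in> cyl N A (\<nu> @ [i]). h j x = c))
   \<and> (\<forall>j\<in>{1..nsuccs N A (last \<nu>) - 1}. (\<integral>x. h j x \<partial>M) = 0)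
   \<and> (\<forall>j\<in>{1..nsuccs N A (last \<nu>) - 1}. \<forall>j'\<in>{1..nsuccs N A (last \<nu>) - 1}.
        (\<integral>x. h j x * h j' x \<partial>M) = (if j = j' then 1 else 0))
   \<and> ((\<forall>k\<in>{0..nsuccs N A (last \<nu>) - 1}. e k \<in> F)
      \<and> (\<forall>k\<in>{0..nsuccs N A (last \<nu>) - 1}. \<forall>k'\<in>{0..nsuccs N A (last \<nu>) - 1}.
           (\<integral>x. e k x * e k' x \<partial>M) = (if k = k' then 1 else 0))
      \<and> (\<forall>f\<in>F. \<exists>c :: nat \<Rightarrow> real. \<forall>x \<in> Omega N A.
           f x = (\<Sum>k=0..nsuccs N A (last \<nu>) - 1. c k * e k x)))"
proof -
  define L where "L = last \<nu>"
  define c where "c = nsuccs N A L"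
  define S where "S = succs N A L"
  define \<mu> where "\<mu> = measure M (cyl N A \<nu>)"
  define p where "p k = Pmat A lam u L (\<iota> k)" for k
  define Cn where "Cn k = cyl N A (\<nu> @ [\<iota> k])" for k
  define G where "G b x = (\<Sum>k=1..c. b k * indicator (Cn k) x)" for b :: "nat \<Rightarrow> real" and x :: "nat \<Rightarrow> nat"
  have nu_adm: "\<nu> \<in> admissible_words N A" and nu_ne: "\<nu> \<noteq> []"
    using nu beta unfolding words_from_def by auto
  have L_in: "L \<in> {1..N}"
    using nu_adm last_in_set[OF nu_ne] unfolding admissible_words_def L_def by blast
  have S_def': "S = {j \<in> {1..N}. A L j = 1}" unfolding S_def succs_def by simp
  have cS: "card S = c" unfolding c_def S_def nsuccs_def by simp
  have finS: "finite S" unfolding S_def' by simp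
  have iota': "bij_betw \<iota> {1..c} S" using iota unfolding c_def S_def L_def by simp
  have iota_in: "\<iota> k \<in> S" if "k \<in> {1..c}" for k
    by (rule bij_betw_apply[OF iota' that])
  have iota_inj: "\<iota> k = \<iota> k' \<Longrightarrow> k \<in> {1..c} \<Longrightarrow> k' \<in> {1..c} \<Longrightarrow> k = k'" for k k'
    by (rule inj_onD[OF bij_betw_imp_inj_on[OF iota']])
  have iota_surj: "\<exists>k\<in>{1..c}. \<iota> k = i" if "i \<in> S" for i
  proof -
    have "i \<in> \<iota> ` {1..c}" using that bij_betw_imp_surj_on[OF iota'] by simp
    then show ?thesis by blast
  qed
  have c2': "c \<ge> 2" using c2 unfolding c_def L_def .
  have sumS: "(\<Sum>j\<in>{1..N}. A L j * u j) = (\<Sum>j\<in>S. u j)"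
  proof -
    have "(\<Sum>j\<in>S. u j) = (\<Sum>j\<in>{1..N}. if A L j = 1 then u j else 0)"
      unfolding S_def' by (rule sum.inter_filter) simp
    also have "\<dots> = (\<Sum>j\<in>{1..N}. A L j * u j)"
    proof (rule sum.cong)
      fix j assume "j \<in> {1..N}"
      then have "A L j = 0 \<or> A L j = 1" using A01 L_in unfolding zero_one_matrix_def by blast
      then show "(if A L j = 1 then u j else 0) = A L j * u j" by auto
    qed simp
    finally show ?thesis by simp
  qed
  have S_ne: "S \<noteq> {}" using cS c2' by auto
  then obtain i0 where i0: "i0 \<in> S" by blast
  have uL: "u L > 0" using u_pos L_in by auto
  have sumSpos: "(\<Sum>j\<in>S. u j) > 0"
  proof -
    have "\<forall>j\<in>S. u j > 0" using u_pos unfolding S_def' by auto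
    then show ?thesis using finS i0 by (intro sum_pos2[where i=i0]) (auto simp: less_imp_le)
  qed
  have lamuL: "lam * u L = (\<Sum>j\<in>S. u j)" using eigen L_in sumS by auto
  have lam_pos: "lam > 0" using lamuL sumSpos uL by (metis zero_less_mult_pos2)
  have P_S: "Pmat A lam u L i = u i / (lam * u L)" if "i \<in> S" for i
    using that unfolding Pmat_def S_def' by simp
  have p_pos: "p k > 0" if "k \<in> {1..c}" for k
    using iota_in[OF that] P_S u_pos lam_pos uL unfolding p_def S_def' by auto
  have sum_p: "(\<Sum>k=1..c. p k) = 1"
  proof -
    have "(\<Sum>k=1..c. p k) = (\<Sum>i\<in>S. Pmat A lam u L i)"
      unfolding p_def by (rule sum.reindex_bij_betw[OF iota'])
    also have "\<dots> = (\<Sum>i\<in>S. u i / (lam * u L))" by (rule sum.cong) (auto simp: P_S)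
    also have "\<dots> = (\<Sum>i\<in>S. u i) / (lam * u L)" by (simp add: sum_divide_distrib)
    also have "\<dots> = 1" using lamuL sumSpos by simp
    finally show ?thesis .
  qed
  have q_eq: "q m = (\<Sum>k=1..m. p k)" for m unfolding q_def p_def L_def by simp
  have q_pos: "q m > 0" if "1 \<le> m" "m \<le> c" for m
    unfolding q_eq using that p_pos by (intro sum_pos2[where i=1]) (auto simp: less_imp_le)
  have q_Suc: "q (Suc m) = q m + p (Suc m)" for m unfolding q_eq by simp
  have adm_ext: "\<nu> @ [i] \<in> admissible_words N A" if "i \<in> S" for i
  proof -
    have iN: "i \<in> {1..N}" and AL: "A L i = 1" using that unfolding S_def' by auto
    show ?thesis unfolding admissible_words_def
    proof (intro CollectI conjI allI impI)
      show "set (\<nu> @ [i]) \<subseteq> {1..N}" using nu_adm iN unfolding admissible_words_def by auto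
    next
      fix n assume n: "Suc n < length (\<nu> @ [i])"
      show "A ((\<nu> @ [i]) ! n) ((\<nu> @ [i]) ! Suc n) = 1"
      proof (cases "Suc n < length \<nu>")
        case True
        then show ?thesis using nu_adm unfolding admissible_words_def by (auto simp: nth_append)
      next
        case False
        then have "n = length \<nu> - 1" using n by simp
        then show ?thesis using AL nu_ne unfolding L_def by (auto simp: nth_append last_conv_nth)
      qed
    qed
  qed
  have spM: "space M = Omega N A" and setsM: "sets M = sigma_sets (Omega N A) (cyl N A ` admissible_words N A)"
    and emM: "\<And>\<alpha>. \<alpha> \<in> admissible_words N A \<Longrightarrow> \<alpha> \<noteq> [] \<Longrightarrow>
        emeasure M (cyl N A \<alpha>) = ennreal (u (last \<alpha>) / lam ^ (length \<alpha> - 1))"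
    using mu unfolding is_mu_c_def by auto
  have cyl_sub: "cyl N A \<alpha> \<subseteq> space M" for \<alpha> unfolding spM cyl_def by auto
  have mu_eq: "\<mu> = u L / lam ^ (length \<nu> - 1)"
  proof -
    have "u L / lam ^ (length \<nu> - 1) \<ge> 0" using uL lam_pos by simp
    then show ?thesis unfolding \<mu>_def measure_def using emM[OF nu_adm nu_ne] unfolding L_def by simp
  qed
  have mu_pos: "\<mu> > 0" unfolding mu_eq using uL lam_pos by simp
  have Cn_sets: "Cn k \<in> sets M" if "k \<in> {1..c}" for k
    unfolding setsM Cn_def using adm_ext[OF iota_in[OF that]] by (intro sigma_sets.Basic) auto
  have Cn_meas: "measure M (Cn k) = \<mu> * p k" if "k \<in> {1..c}" for k
  proof -
    have iS: "\<iota> k \<in> S" using iota_in[OF that] .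
    have "u (\<iota> k) > 0" using iS u_pos unfolding S_def' by auto
    then have "u (\<iota> k) / lam ^ length \<nu> \<ge> 0" using lam_pos by simp
    then have "measure M (Cn k) = u (\<iota> k) / lam ^ length \<nu>"
      unfolding Cn_def measure_def using emM[OF adm_ext[OF iS]] by simp
    also have "\<dots> = \<mu> * p k"
    proof -
      have ln: "lam ^ length \<nu> = lam ^ (length \<nu> - 1) * lam"
        using nu_ne by (cases "length \<nu>") auto
      show ?thesis unfolding mu_eq p_def P_S[OF iS] ln using uL lam_pos by (simp add: field_simps)
    qed
    finally show ?thesis .
  qed
  have Cn_fin: "emeasure M (Cn k) < \<infinity>" if "k \<in> {1..c}" for k
  proof -
    have "emeasure M (Cn k) = ennreal (u (last (\<nu> @ [\<iota> k])) / lam ^ (length (\<nu> @ [\<iota> k]) - 1))"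
      unfolding Cn_def using emM[OF adm_ext[OF iota_in[OF that]]] by simp
    then show ?thesis by simp
  qed
  have Cn_sub: "Cn k \<subseteq> cyl N A \<nu>" for k
    unfolding Cn_def cyl_def by (auto simp: nth_append)
  have Cn_disj: "x \<in> Cn k \<Longrightarrow> x \<in> Cn k' \<Longrightarrow> k \<in> {1..c} \<Longrightarrow> k' \<in> {1..c} \<Longrightarrow> k = k'" for x k k'
  proof -
    assume "x \<in> Cn k" "x \<in> Cn k'" "k \<in> {1..c}" "k' \<in> {1..c}"
    then have "x (length \<nu>) = \<iota> k" "x (length \<nu>) = \<iota> k'" unfolding Cn_def cyl_def by auto
    then show "k = k'" using iota_inj \<open>k \<in> {1..c}\<close> \<open>k' \<in> {1..c}\<close> by metis
  qed
  have Cn_cover: "\<exists>k\<in>{1..c}. x \<in> Cn k" if x: "x \<in> cyl N A \<nu>" for x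
  proof -
    have xO: "x \<in> Omega N A" and xnu: "\<forall>i<length \<nu>. x i = \<nu> ! i" using x unfolding cyl_def by auto
    define n where "n = length \<nu> - 1"
    have n1: "Suc n = length \<nu>" unfolding n_def using nu_ne by simp
    have "x n = L" using xnu n1 nu_ne unfolding L_def by (simp add: last_conv_nth n_def)
    moreover have "x (Suc n) \<in> {1..N}" "A (x n) (x (Suc n)) = 1" using xO unfolding Omega_def by auto
    ultimately have "x (length \<nu>) \<in> S" unfolding S_def' n1[symmetric] by auto
    then obtain k where k: "k \<in> {1..c}" "\<iota> k = x (length \<nu>)" using iota_surj by blast
    have "x \<in> Cn k" unfolding Cn_def cyl_def
    proof (intro CollectI conjI allI impI)
      show "x \<in> Omega N A" by (rule xO)
    next
      fix i assume i: "i < length (\<nu> @ [\<iota> k])"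
      show "x i = (\<nu> @ [\<iota> k]) ! i"
      proof (cases "i < length \<nu>")
        case True then show ?thesis using xnu by (simp add: nth_append)
      next
        case False then have "i = length \<nu>" using i by simp
        then show ?thesis using k by simp
      qed
    qed
    then show ?thesis using k by blast
  qed
  have G_in: "G b x = b k" if "x \<in> Cn k" "k \<in> {1..c}" for b x k
  proof -
    have "G b x = (\<Sum>k'=1..c. if k' = k then b k' else 0)"
      unfolding G_def
    proof (rule sum.cong)
      fix k' assume "k' \<in> {1..c}"
      note k' = this
      show "b k' * indicator (Cn k') x = (if k' = k then b k' else 0)"
      proof (cases "k' = k")
        case True then show ?thesis using that(1) by simp
      next
        case False then have "x \<notin> Cn k'" using Cn_disj[of x k k'] that k' by blast
        then show ?thesis using False by simp
      qed
    qed simp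
    also have "\<dots> = b k" using that(2) by (simp add: sum.delta')
    finally show ?thesis .
  qed
  have G_out: "G b x = 0" if "\<not> (\<exists>k\<in>{1..c}. x \<in> Cn k)" for b x
    unfolding G_def
  proof (rule sum.neutral, rule ballI)
    fix k assume "k \<in> {1..c}"
    then have "x \<notin> Cn k" using that by blast
    then show "b k * indicator (Cn k) x = 0" by simp
  qed
  have G_mult: "G b x * G b' x = G (\<lambda>k. b k * b' k) x" for b b' x
    using G_in G_out by (cases "\<exists>k\<in>{1..c}. x \<in> Cn k") auto
  have G_int: "(\<integral>x. G b x \<partial>M) = \<mu> * (\<Sum>k=1..c. b k * p k)" for b
  proof -
    have "(\<integral>x. G b x \<partial>M) = (\<Sum>k=1..c. \<integral>x. b k * indicator (Cn k) x \<partial>M)"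
      unfolding G_def
    proof (rule Bochner_Integration.integral_sum)
      fix k assume k: "k \<in> {1..c}"
      show "integrable M (\<lambda>x. b k * indicator (Cn k) x)"
        by (rule integrable_mult_right, rule integrable_real_indicator[OF Cn_sets[OF k] Cn_fin[OF k]])
    qed
    also have "\<dots> = (\<Sum>k=1..c. b k * (\<mu> * p k))"
    proof (rule sum.cong)
      fix k assume k: "k \<in> {1..c}"
      have "Cn k \<inter> space M = Cn k" using cyl_sub[of "\<nu> @ [\<iota> k]"] unfolding Cn_def by blast
      then show "(\<integral>x. b k * indicator (Cn k) x \<partial>M) = b k * (\<mu> * p k)"
        using Cn_meas[OF k] by simp
    qed simp
    also have "\<dots> = \<mu> * (\<Sum>k=1..c. b k * p k)" by (simp add: sum_distrib_left algebra_simps)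
    finally show ?thesis .
  qed
  have h_G: "h j x = G (a j) x" for j x unfolding h_def G_def Cn_def c_def L_def by simp
  define E where "E k = (if k = 0 then (\<lambda>_::nat. 1 / sqrt \<mu>) else a k)" for k
  have e_G: "e k x = G (E k) x" for k x
  proof (cases "k = 0")
    case True
    show ?thesis
    proof (cases "\<exists>k\<in>{1..c}. x \<in> Cn k")
      case True2: True
      then obtain k' where "k' \<in> {1..c}" "x \<in> Cn k'" by blast
      then show ?thesis using True G_in[of x k'] Cn_sub[of k'] unfolding e_def E_def \<mu>_def by auto
    next
      case False
      then have "x \<notin> cyl N A \<nu>" using Cn_cover by blast
      then show ?thesis using True False G_out unfolding e_def E_def by auto
    qed
  next
    case False
    then show ?thesis using h_G unfolding e_def E_def by simp
  qed
  define \<alpha> where "\<alpha> j = sqrt (p (j+1) / (\<mu> * q j * q (j+1)))" for j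
  define \<beta>' where "\<beta>' j = sqrt (q j / (\<mu> * q (j+1) * p (j+1)))" for j
  have a_eq: "a j k = (if 1 \<le> k \<and> k \<le> j then \<alpha> j else if k = j + 1 then - \<beta>' j else 0)" for j k
    unfolding a_def \<alpha>_def \<beta>'_def p_def \<mu>_def L_def by simp
  have ab: "\<alpha> j * q j = \<beta>' j * p (j+1)" "\<alpha> j ^ 2 * q j + \<beta>' j ^ 2 * p (j+1) = 1 / \<mu>"
    "\<alpha> j \<ge> 0" "\<beta>' j > 0"
    if j: "j \<in> {1..c-1}" for j
  proof -
    have P: "p (j+1) > 0" using p_pos j by auto
    have Q: "q j > 0" using q_pos j by auto
    have Q': "q (j+1) = q j + p (j+1)" using q_Suc by simp
    have a2: "\<alpha> j ^ 2 = p (j+1) / (\<mu> * q j * q (j+1))"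
      unfolding \<alpha>_def using P Q Q' mu_pos by simp
    have b2: "\<beta>' j ^ 2 = q j / (\<mu> * q (j+1) * p (j+1))"
      unfolding \<beta>'_def using P Q Q' mu_pos by simp
    show "\<alpha> j \<ge> 0" unfolding \<alpha>_def using P Q Q' mu_pos by simp
    show "\<beta>' j > 0" unfolding \<beta>'_def using P Q Q' mu_pos by simp
    have "(\<alpha> j * q j) ^ 2 = (\<beta>' j * p (j+1)) ^ 2"
    proof -
      have Q'p: "q (j+1) > 0" using P Q Q' by simp
      have "(\<alpha> j * q j) ^ 2 = p (j+1) * q j / (\<mu> * q (j+1))"
        unfolding power_mult_distrib a2 using Q Q'p mu_pos P by (simp add: field_simps power2_eq_square)
      moreover have "(\<beta>' j * p (j+1)) ^ 2 = p (j+1) * q j / (\<mu> * q (j+1))"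
        unfolding power_mult_distrib b2 using Q Q'p mu_pos P by (simp add: field_simps power2_eq_square)
      ultimately show ?thesis by simp
    qed
    moreover have "\<alpha> j * q j \<ge> 0" "\<beta>' j * p (j+1) \<ge> 0"
      unfolding \<alpha>_def \<beta>'_def using P Q Q' mu_pos by simp_all
    ultimately show "\<alpha> j * q j = \<beta>' j * p (j+1)" using power2_eq_iff_nonneg by blast
    show "\<alpha> j ^ 2 * q j + \<beta>' j ^ 2 * p (j+1) = 1 / \<mu>"
    proof -
      have Q'p: "q (j+1) > 0" using P Q Q' by simp
      have "\<alpha> j ^ 2 * q j = p (j+1) / (\<mu> * q (j+1))" unfolding a2 using Q by simp
      moreover have "\<beta>' j ^ 2 * p (j+1) = q j / (\<mu> * q (j+1))" unfolding b2 using P by simp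
      ultimately have "\<alpha> j ^ 2 * q j + \<beta>' j ^ 2 * p (j+1) = (p (j+1) + q j) / (\<mu> * q (j+1))"
        by (simp add: add_divide_distrib)
      also have "\<dots> = 1 / \<mu>" using Q' Q'p mu_pos by (simp add: add.commute)
      finally show ?thesis .
    qed
  qed
  have sum_a: "(\<Sum>k=1..c. a j k * g k) = \<alpha> j * (\<Sum>k=1..j. g k) - \<beta>' j * g (j+1)"
    if j: "j \<in> {1..c-1}" for j g
  proof -
    have "(\<Sum>k=1..c. a j k * g k) = (\<Sum>k=1..Suc j. a j k * g k)"
      using j by (intro sum.mono_neutral_right) (auto simp: a_eq)
    also have "\<dots> = (\<Sum>k=1..j. a j k * g k) + a j (Suc j) * g (Suc j)" by simp
    also have "(\<Sum>k=1..j. a j k * g k) = (\<Sum>k=1..j. \<alpha> j * g k)"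
      by (rule sum.cong) (auto simp: a_eq)
    finally show ?thesis by (simp add: a_eq sum_distrib_left)
  qed
  have S1: "(\<Sum>k=1..c. a j k * p k) = 0" if j: "j \<in> {1..c-1}" for j
    using sum_a[OF j, of p] ab(1)[OF j] unfolding q_eq by simp
  have S2: "(\<Sum>k=1..c. a j k * a j k * p k) = 1 / \<mu>" if j: "j \<in> {1..c-1}" for j
  proof -
    have "(\<Sum>k=1..c. a j k * a j k * p k) = (\<Sum>k=1..c. a j k * (a j k * p k))"
      by (simp add: mult.assoc)
    also have "\<dots> = \<alpha> j * (\<Sum>k=1..j. a j k * p k) - \<beta>' j * (a j (j+1) * p (j+1))"
      by (rule sum_a[OF j])
    also have "(\<Sum>k=1..j. a j k * p k) = (\<Sum>k=1..j. \<alpha> j * p k)"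
      by (rule sum.cong) (auto simp: a_eq)
    finally show ?thesis using ab(2)[OF j] unfolding q_eq
      by (simp add: a_eq sum_distrib_left[symmetric] power2_eq_square algebra_simps)
  qed
  have S3: "(\<Sum>k=1..c. a j k * a j' k * p k) = 0" if j: "j \<in> {1..c-1}" "j' \<in> {1..c-1}" "j < j'" for j j'
  proof -
    have "(\<Sum>k=1..c. a j k * a j' k * p k) = (\<Sum>k=1..c. a j k * (a j' k * p k))"
      by (simp add: mult.assoc)
    also have "\<dots> = \<alpha> j * (\<Sum>k=1..j. a j' k * p k) - \<beta>' j * (a j' (j+1) * p (j+1))"
      by (rule sum_a[OF j(1)])
    also have "(\<Sum>k=1..j. a j' k * p k) = (\<Sum>k=1..j. \<alpha> j' * p k)"
      using j by (intro sum.cong) (auto simp: a_eq)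
    also have "a j' (j+1) = \<alpha> j'" using j by (simp add: a_eq)
    finally have "(\<Sum>k=1..c. a j k * a j' k * p k) = \<alpha> j' * (\<alpha> j * q j - \<beta>' j * p (j+1))"
      unfolding q_eq by (simp add: sum_distrib_left[symmetric] algebra_simps)
    then show ?thesis using ab(1)[OF j(1)] by simp
  qed
  have inner_a: "\<mu> * (\<Sum>k=1..c. a j k * a j' k * p k) = (if j = j' then 1 else 0)"
    if j: "j \<in> {1..c-1}" "j' \<in> {1..c-1}" for j j'
  proof -
    consider "j = j'" | "j < j'" | "j' < j" by linarith
    then show ?thesis
    proof cases
      case 1 then show ?thesis using S2[OF j(1)] mu_pos by simp
    next
      case 2 then show ?thesis using S3[OF j 2] by simp
    next
      case 3 then show ?thesis using S3[OF j(2) j(1) 3] by (simp add: mult.commute mult.left_commute)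
    qed
  qed
  have inner_E: "\<mu> * (\<Sum>k=1..c. E i k * E i' k * p k) = (if i = i' then 1 else 0)"
    if i: "i \<in> {0..c-1}" "i' \<in> {0..c-1}" for i i'
  proof -
    have s: "(\<Sum>k=1..c. (1 / sqrt \<mu>) * (1 / sqrt \<mu>) * p k) = 1 / \<mu>"
      using sum_p mu_pos by (simp add: sum_divide_distrib[symmetric])
    have s1: "(\<Sum>k=1..c. (1 / sqrt \<mu>) * a j k * p k) = 0" if "j \<in> {1..c-1}" for j
      using S1[OF that] by (simp add: mult.assoc sum_divide_distrib[symmetric])
    have s2: "(\<Sum>k=1..c. a j k * (1 / sqrt \<mu>) * p k) = 0" if "j \<in> {1..c-1}" for j
      using S1[OF that] by (simp add: sum_divide_distrib[symmetric])
    show ?thesis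
    proof (cases "i = 0"; cases "i' = 0")
      assume "i = 0" "i' = 0" then show ?thesis unfolding E_def using s mu_pos by simp
    next
      assume "i = 0" "i' \<noteq> 0" then show ?thesis unfolding E_def using s1[of i'] i by simp
    next
      assume "i \<noteq> 0" "i' = 0" then show ?thesis unfolding E_def using s2[of i] i by simp
    next
      assume "i \<noteq> 0" "i' \<noteq> 0" then show ?thesis unfolding E_def using inner_a[of i i'] i by simp
    qed
  qed
  have span: "\<forall>w. \<exists>d0 (d::nat \<Rightarrow> real). \<forall>k\<in>{1..n+1}. w k = d0 + (\<Sum>j=1..n. d j * a j k)"
    if "n + 1 \<le> c" for n
    using that
  proof (induction n)
    case 0
    show ?case by (intro allI, rule exI[of _ "w 1" for w]) auto
  next
    case (Suc m)
    show ?case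
    proof
      fix w :: "nat \<Rightarrow> real"
      have "m + 1 \<le> c" using Suc.prems by simp
      then have "\<forall>w. \<exists>d0 (d::nat \<Rightarrow> real). \<forall>k\<in>{1..m+1}. w k = d0 + (\<Sum>j=1..m. d j * a j k)"
        by (rule Suc.IH)
      then have "\<exists>d0 (d::nat \<Rightarrow> real). \<forall>k\<in>{1..m+1}. w k = d0 + (\<Sum>j=1..m. d j * a j k)"
        by (rule spec)
      then obtain d0 d where dd: "\<forall>k\<in>{1..m+1}. w k = d0 + (\<Sum>j=1..m. d j * a j k)"
        by blast
      have mj: "Suc m \<in> {1..c-1}" using Suc.prems by auto
      note abm = ab[OF mj]
      define dm where "dm = (d0 - w (Suc m + 1)) / (\<alpha> (Suc m) + \<beta>' (Suc m))"
      define d0' where "d0' = d0 - dm * \<alpha> (Suc m)"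
      have pos: "\<alpha> (Suc m) + \<beta>' (Suc m) > 0" using abm(3,4) by simp
      have "\<forall>k\<in>{1..Suc m+1}. w k = d0' + (\<Sum>j=1..Suc m. (d(Suc m := dm)) j * a j k)"
      proof
        fix k assume k: "k \<in> {1..Suc m+1}"
        have sm: "(\<Sum>j=1..m. (d(Suc m := dm)) j * a j k) = (\<Sum>j=1..m. d j * a j k)"
          by (rule sum.cong) auto
        show "w k = d0' + (\<Sum>j=1..Suc m. (d(Suc m := dm)) j * a j k)"
        proof (cases "k \<le> Suc m")
          case True
          then have "w k = d0 + (\<Sum>j=1..m. d j * a j k)" using dd k by auto
          moreover have "a (Suc m) k = \<alpha> (Suc m)" using True k by (simp add: a_eq)
          ultimately show ?thesis using sm unfolding d0'_def by simp
        next
          case False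
          then have kk: "k = Suc m + 1" using k by simp
          have z: "(\<Sum>j=1..m. d j * a j k) = 0" using kk by (intro sum.neutral) (auto simp: a_eq)
          have ak: "a (Suc m) k = - \<beta>' (Suc m)" using kk by (simp add: a_eq)
          have dms: "dm * (\<alpha> (Suc m) + \<beta>' (Suc m)) = d0 - w k" unfolding dm_def kk using pos by simp
          have spl: "(\<Sum>j=1..Suc m. (d(Suc m := dm)) j * a j k) = (\<Sum>j=1..m. (d(Suc m := dm)) j * a j k) + dm * a (Suc m) k"
            by simp
          show ?thesis unfolding spl sm z ak d0'_def mult_minus_right using dms unfolding distrib_left
            by linarith
        qed
      qed
      then show "\<exists>d0 (d::nat \<Rightarrow> real). \<forall>k\<in>{1..Suc m+1}. w k = d0 + (\<Sum>j=1..Suc m. d j * a j k)"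
        by blast
    qed
  qed
  have cc: "c - 1 + 1 = c" using c2' by simp
  have part1: "\<forall>j\<in>{1..c - 1}.
        (\<forall>x \<in> Omega N A - cyl N A \<nu>. h j x = 0) \<and>
        (\<forall>i \<in> S. \<exists>c. \<forall>x \<in> cyl N A (\<nu> @ [i]). h j x = c)"
  proof (intro ballI conjI)
    fix j x assume "x \<in> Omega N A - cyl N A \<nu>"
    then have "\<not> (\<exists>k\<in>{1..c}. x \<in> Cn k)" using Cn_sub by blast
    then show "h j x = 0" using h_G G_out by simp
  next
    fix j i assume "i \<in> S"
    then obtain k where k: "k \<in> {1..c}" "\<iota> k = i" using iota_surj by blast
    show "\<exists>c. \<forall>x \<in> cyl N A (\<nu> @ [i]). h j x = c"
      using k G_in h_G unfolding Cn_def by metis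
  qed
  have part2: "\<forall>j\<in>{1..c - 1}. (\<integral>x. h j x \<partial>M) = 0"
    using h_G G_int S1 by simp
  have part3: "\<forall>j\<in>{1..c - 1}. \<forall>j'\<in>{1..c - 1}. (\<integral>x. h j x * h j' x \<partial>M) = (if j = j' then 1 else 0)"
    using h_G G_mult G_int inner_a by (simp add: mult.assoc)
  have part4a: "\<forall>k\<in>{0..c - 1}. e k \<in> F"
  proof
    fix k assume "k \<in> {0..c-1}"
    have "\<forall>x \<in> Omega N A - cyl N A \<nu>. e k x = 0"
    proof
      fix x assume "x \<in> Omega N A - cyl N A \<nu>"
      then have "\<not> (\<exists>k\<in>{1..c}. x \<in> Cn k)" using Cn_sub by blast
      then show "e k x = 0" using e_G G_out by simp
    qed
    moreover have "\<forall>i \<in> S. \<exists>c. \<forall>x \<in> cyl N A (\<nu> @ [i]). e k x = c"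
    proof
      fix i assume "i \<in> S"
      then obtain k' where k: "k' \<in> {1..c}" "\<iota> k' = i" using iota_surj by blast
      show "\<exists>c. \<forall>x \<in> cyl N A (\<nu> @ [i]). e k x = c"
        using k G_in e_G unfolding Cn_def by metis
    qed
    ultimately show "e k \<in> F" unfolding F_def S_def L_def by simp
  qed
  have part4b: "\<forall>k\<in>{0..c - 1}. \<forall>k'\<in>{0..c - 1}. (\<integral>x. e k x * e k' x \<partial>M) = (if k = k' then 1 else 0)"
    using e_G G_mult G_int inner_E by (simp add: mult.assoc)
  have part4c: "\<forall>f\<in>F. \<exists>cf :: nat \<Rightarrow> real. \<forall>x \<in> Omega N A.
           f x = (\<Sum>k=0..c - 1. cf k * e k x)"
  proof
    fix f assume fF: "f \<in> F"
    have f0: "\<forall>x \<in> Omega N A - cyl N A \<nu>. f x = 0" using fF unfolding F_def by simp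
    have fc: "\<exists>cst. \<forall>x \<in> Cn k. f x = cst" if "k \<in> {1..c}" for k
      using fF iota_in[OF that] unfolding F_def Cn_def S_def L_def by simp
    define w where "w k = (SOME cst. \<forall>x \<in> Cn k. f x = cst)" for k
    have fw: "f x = w k" if "k \<in> {1..c}" "x \<in> Cn k" for k x
      using someI_ex[OF fc[OF that(1)]] that(2) unfolding w_def by blast
    obtain d0 d where dd: "\<forall>k\<in>{1..c}. w k = d0 + (\<Sum>j=1..c-1. d j * a j k)"
      using span[of "c-1"] cc by fastforce
    define cf where "cf k = (if k = 0 then d0 * sqrt \<mu> else d k)" for k
    have "\<forall>x \<in> Omega N A. f x = (\<Sum>k=0..c - 1. cf k * e k x)"
    proof
      fix x assume xO: "x \<in> Omega N A"
      have split: "(\<Sum>k=0..c - 1. cf k * e k x) = cf 0 * e 0 x + (\<Sum>j=1..c-1. d j * h j x)"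
        by (subst sum.atLeast_Suc_atMost) (auto simp: cf_def e_def)
      show "f x = (\<Sum>k=0..c - 1. cf k * e k x)"
      proof (cases "\<exists>k\<in>{1..c}. x \<in> Cn k")
        case True
        then obtain k where k: "k \<in> {1..c}" "x \<in> Cn k" by blast
        have "e 0 x = 1 / sqrt \<mu>" using e_G G_in[OF k(2) k(1)] unfolding E_def by simp
        moreover have "h j x = a j k" for j using h_G G_in[OF k(2) k(1)] by simp
        ultimately show ?thesis unfolding split using fw[OF k] dd k mu_pos cf_def by simp
      next
        case False
        then have "x \<notin> cyl N A \<nu>" using Cn_cover by blast
        then have "f x = 0" using f0 xO by blast
        moreover have "e k x = 0" for k using e_G G_out[OF False] by simp
        ultimately show ?thesis by simp
      qed
    qed
    then show "\<exists>cf :: nat \<Rightarrow> real. \<forall>x \<in> Omega N A. f x = (\<Sum>k=0..c - 1. cf k * e k x)" by blast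
  qed
  show ?thesis
    using part1 part2 part3 part4a part4b part4c unfolding c_def S_def L_def by blast
qed

end
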